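(* Let $M,N\in\mathbb{S}^{q+r}$. If there exist scalars $\alpha\ge 0$ and $\beta>0$ such that $M-\alpha N\ge\begin{bmatrix}\beta I_q&0\\0&0\end{bmatrix}$ ( * ), then $\mathcal{Z}_r(N)\subseteq\mathcal{Z}_r^+(M)$. Moreover, if $N\in\boldsymbol{\Pi}_{q,r}$, $M_{22}\le 0$, and $N$ has at least one positive eigenvalue, then $\mathcal{Z}_r(N)\subseteq\mathcal{Z}_r^+(M)$ if and only if there exist $\alpha\ge 0$ and $\beta>0$ such that ( * ) holds.
   Context: $\mathbb{S}^k$ denotes the real symmetric $k\times k$ matrices; for symmetric matrices, $A\ge 0$ ($A>0$) means positive semidefinite (definite), $A\le B$ means $B-A\ge0$. $A^\dagger$ is the Moore–Penrose pseudo-inverse. Any $\Pi\in\mathbb{S}^{q+r}$ (in particular $M,N$) is partitioned as $\Pi=\begin{bmatrix}\Pi_{11}&\Pi_{12}\\ \Pi_{21}&\Pi_{22}\end{bmatrix}$ with $\Pi_{11}\in\mathbb{S}^q$, $\Pi_{22}\in\mathbb{S}^r$. The generalized Schur complement is $\Pi\mid\Pi_{22}:=\Pi_{11}-\Pi_{12}\Pi_{22}^\dagger\Pi_{21}$. The set $\boldsymbol{\Pi}_{q,r}$ consists of all $\Pi\in\mathbb{S}^{q+r}$ with $\Pi_{22}\le 0$, $\Pi\mid\Pi_{22}\ge 0$ and $\ker\Pi_{22}\subseteq\ker\Pi_{12}$. Define $\mathcal{Z}_r(\Pi)=\{Z\in\mathbb{R}^{r\times q}:\begin{bmatrix}I_q\\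 Z\end{bmatrix}^\top\Pi\begin{bmatrix}I_q\\ Z\end{bmatrix}\ge 0\}$ and $\mathcal{Z}_r^+(\Pi)$ the same with $>0$. *)

theory Defs
  imports "HOL-Analysis.Analysis"
begin

text \<open>Matrices in S^(q+r) are rendered as real^('q::finite+'r::finite)^('q+'r), with the
index set split as Inl (first q indices) and Inr (last r indices).\<close>

definition symm :: "real^'n^'n \<Rightarrow> bool" where
  "symm A \<longleftrightarrow> transpose A = A"

definition psd :: "real^'n^'n \<Rightarrow> bool" where
  "psd A \<longleftrightarrow> symm A \<and> (\<forall>x. 0 \<le> x \<bullet> (A *v x))"

definition pd :: "real^'n^'n \<Rightarrow> bool" where
  "pd A \<longleftrightarrow> symm A \<and> (\<forall>x. x \<noteq> 0 \<longrightarrow> 0 < x \<bullet> (A *v x))"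

definition loewner_le :: "real^'n^'n \<Rightarrow> real^'n^'n \<Rightarrow> bool" where
  "loewner_le A B \<longleftrightarrow> psd (B - A)"

definition pinv :: "real^'n^'m \<Rightarrow> real^'m^'n" where
  "pinv A = (THE X. A ** X ** A = A \<and> X ** A ** X = X \<and>
                    transpose (A ** X) = A ** X \<and> transpose (X ** A) = X ** A)"

definition blk11 :: "real^('q::finite+'r::finite)^('q+'r) \<Rightarrow> real^'q^'q" where
  "blk11 P = (\<chi> i j. P $ Inl i $ Inl j)"
definition blk12 :: "real^('q::finite+'r::finite)^('q+'r) \<Rightarrow> real^'r^'q" where
  "blk12 P = (\<chi> i j. P $ Inl i $ Inr j)"
definition blk21 :: "real^('q::finite+'r::finite)^('q+'r) \<Rightarrow> real^'q^'r" where
  "blk21 P = (\<chi> i j. P $ Inr i $ Inl j)"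
definition blk22 :: "real^('q::finite+'r::finite)^('q+'r) \<Rightarrow> real^'r^'r" where
  "blk22 P = (\<chi> i j. P $ Inr i $ Inr j)"

definition schur :: "real^('q::finite+'r::finite)^('q+'r) \<Rightarrow> real^'q^'q" where
  "schur P = blk11 P - blk12 P ** pinv (blk22 P) ** blk21 P"

definition PiSet :: "(real^('q::finite+'r::finite)^('q+'r)) set" where
  "PiSet = {P. symm P \<and> loewner_le (blk22 P) 0 \<and> psd (schur P) \<and>
              {x. blk22 P *v x = 0} \<subseteq> {x. blk12 P *v x = 0}}"

definition stackIZ :: "real^'q::finite^'r::finite \<Rightarrow> real^'q^('q+'r)" where
  "stackIZ Z = (\<chi> k j. case k of Inl i \<Rightarrow> (if i = j then 1 else 0) | Inr i \<Rightarrow> Z $ i $ j)"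

definition Zset :: "real^('q::finite+'r::finite)^('q+'r) \<Rightarrow> (real^'q^'r) set" where
  "Zset P = {Z. psd (transpose (stackIZ Z) ** P ** stackIZ Z)}"

definition Zset_plus :: "real^('q::finite+'r::finite)^('q+'r) \<Rightarrow> (real^'q^'r) set" where
  "Zset_plus P = {Z. pd (transpose (stackIZ Z) ** P ** stackIZ Z)}"

definition betaI0 :: "real \<Rightarrow> real^('q::finite+'r::finite)^('q+'r)" where
  "betaI0 \<beta> = (\<chi> k l. case (k, l) of (Inl i, Inl j) \<Rightarrow> (if i = j then \<beta> else 0) | _ \<Rightarrow> 0)"

definition has_pos_eigenvalue :: "real^'n^'n \<Rightarrow> bool" where
  "has_pos_eigenvalue A \<longleftrightarrow> (\<exists>c v. c > 0 \<and> v \<noteq> 0 \<and> A *v v = c *\<^sub>R v)"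

end

theory Submission
  imports Defs
begin

lemma dot_transpose: "(transpose A *v x) \<bullet> y = x \<bullet> ((A::real^'n^'m) *v y)"
  by (simp add: dot_lmul_matrix)

lemma symm_dot: "symm A \<Longrightarrow> (A *v x) \<bullet> y = x \<bullet> ((A::real^'n^'n) *v y)"
  by (metis dot_transpose symm_def)

lemma vec_eq_by_inner: "(\<And>y. (a::real^'n) \<bullet> y = b \<bullet> y) \<Longrightarrow> a = b"
  by (metis inner_diff_left right_minus_eq inner_eq_zero_iff)

lemma transpose_eq_by_inner:
  assumes "\<And>x y. (B *v x) \<bullet> y = x \<bullet> ((B::real^'n^'n) *v y)"
  shows "transpose B = B"
proof -
  have "transpose B *v x = B *v x" for x
    by (rule vec_eq_by_inner) (metis assms dot_transpose)
  then show ?thesis by (simp add: matrix_eq)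
qed

definition penrose :: "real^'n^'m \<Rightarrow> real^'m^'n \<Rightarrow> bool" where
  "penrose A X \<longleftrightarrow> A ** X ** A = A \<and> X ** A ** X = X \<and>
                    transpose (A ** X) = A ** X \<and> transpose (X ** A) = X ** A"

lemma penrose_unique:
  assumes "penrose A X" "penrose A Y" shows "X = Y"
proof -
  have a1: "A ** X ** A = A" "X ** A ** X = X" "transpose (A ** X) = A ** X" "transpose (X ** A) = X ** A"
    using assms(1) unfolding penrose_def by auto
  have b1: "A ** Y ** A = A" "Y ** A ** Y = Y" "transpose (A ** Y) = A ** Y" "transpose (Y ** A) = Y ** A"
    using assms(2) unfolding penrose_def by auto
  have "X = X ** (A ** X)" using a1 by (simp add: matrix_mul_assoc)
  also have "\<dots> = X ** transpose X ** transpose A"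
    by (metis a1(3) matrix_transpose_mul matrix_mul_assoc)
  also have "\<dots> = X ** transpose X ** transpose (A ** Y ** A)" using b1 by simp
  also have "\<dots> = X ** (transpose (A ** X) ** transpose (A ** Y))"
    by (simp add: matrix_transpose_mul matrix_mul_assoc)
  also have "\<dots> = X ** A ** X ** A ** Y"
    using a1 b1 by (simp add: matrix_mul_assoc)
  also have "\<dots> = X ** A ** Y" using a1 by simp
  finally have X: "X = X ** A ** Y" .
  have "Y = (Y ** A) ** Y" using b1 by simp
  also have "\<dots> = transpose A ** transpose Y ** Y"
    by (metis b1(4) matrix_transpose_mul)
  also have "\<dots> = transpose (A ** X ** A) ** transpose Y ** Y" using a1 by simp
  also have "\<dots> = transpose (X ** A) ** transpose (Y ** A) ** Y"
    by (simp add: matrix_transpose_mul matrix_mul_assoc)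
  also have "\<dots> = X ** A ** Y ** A ** Y"
    using a1 b1 by (simp add: matrix_mul_assoc)
  also have "\<dots> = X ** A ** Y" by (metis b1(2) matrix_mul_assoc)
  finally show ?thesis using X by simp
qed

lemma penrose_exists_symm:
  fixes A :: "real^'n^'n"
  assumes sA: "symm A"
  shows "\<exists>X. penrose A X"
proof -
  define W where "W = range ((*v) A)"
  have subW: "subspace W" unfolding W_def subspace_def
  proof (intro conjI ballI allI)
    show "0 \<in> range ((*v) A)" by (rule range_eqI[of _ _ 0]) simp
    fix x y assume "x \<in> range ((*v) A)" "y \<in> range ((*v) A)"
    then obtain a b where "x = A *v a" "y = A *v b" by auto
    then show "x + y \<in> range ((*v) A)" by (auto intro!: range_eqI[of _ _ "a + b"] simp: matrix_vector_right_distrib)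
  next
    fix c x assume "x \<in> range ((*v) A)"
    then obtain a where "x = A *v a" by auto
    then show "c *\<^sub>R x \<in> range ((*v) A)" by (auto intro!: range_eqI[of _ _ "c *\<^sub>R a"] simp: matrix_vector_mult_scaleR)
  qed
  have spanW: "span W = W" using subW by (simp add: span_eq_iff)
  have "\<forall>y. \<exists>a. a \<in> W \<and> (\<forall>w\<in>W. orthogonal (y - a) w)"
  proof
    fix y
    obtain a z where "a \<in> span W" "\<And>w. w \<in> span W \<Longrightarrow> orthogonal z w" "y = a + z"
      by (rule orthogonal_subspace_decomp_exists[of W y]) blast
    then show "\<exists>a. a \<in> W \<and> (\<forall>w\<in>W. orthogonal (y - a) w)" using spanW
      by (intro exI[of _ a]) auto
  qed
  from choice[OF this] obtain p where p0: "\<forall>y. p y \<in> W \<and> (\<forall>w\<in>W. orthogonal (y - p y) w)"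
    by blast
  then have p: "\<And>y. p y \<in> W" "\<And>y w. w \<in> W \<Longrightarrow> orthogonal (y - p y) w"
    by blast+
  have puniq: "p y = a" if "a \<in> W" "\<And>w. w \<in> W \<Longrightarrow> orthogonal (y - a) w" for y a
  proof -
    have d: "a - p y \<in> W" using subW that(1) p(1) by (simp add: subspace_diff)
    have "orthogonal (a - p y) (a - p y)"
    proof -
      have "orthogonal (y - p y) (a - p y)" "orthogonal (y - a) (a - p y)"
        using p(2) that(2) d by auto
      then show ?thesis unfolding orthogonal_def by (simp add: inner_diff_left)
    qed
    then show ?thesis by (simp add: orthogonal_def)
  qed
  have pW: "p w = w" if "w \<in> W" for w using puniq[OF that] by (simp add: orthogonal_def)
  have kerperp: "A *v k = 0" if "\<And>w. w \<in> W \<Longrightarrow> orthogonal k w" for k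
  proof -
    have "(A *v k) \<bullet> z = 0" for z
      using that[of "A *v z"] symm_dot[OF sA] by (simp add: W_def orthogonal_def)
    then show ?thesis by (metis inner_eq_zero_iff)
  qed
  have Ap: "A *v p x = A *v x" for x
    using kerperp[OF p(2)[of _ x]] by (simp add: matrix_vector_mult_diff_distrib)
  have plin: "linear p"
  proof (rule linearI)
    fix x y
    show "p (x + y) = p x + p y"
    proof (rule puniq)
      show "p x + p y \<in> W" using subW p(1) by (simp add: subspace_add)
      fix w assume "w \<in> W"
      then have "(x - p x) \<bullet> w = 0" "(y - p y) \<bullet> w = 0" using p(2) unfolding orthogonal_def by blast+
      then show "orthogonal (x + y - (p x + p y)) w" unfolding orthogonal_def
        by (simp add: inner_diff_left inner_add_left)
    qed
  next
    fix c x
    show "p (c *\<^sub>R x) = c *\<^sub>R p x"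
    proof (rule puniq)
      show "c *\<^sub>R p x \<in> W" using subW p(1) by (simp add: subspace_scale)
      fix w assume "w \<in> W"
      then have "(x - p x) \<bullet> w = 0" using p(2) unfolding orthogonal_def by blast+
      then show "orthogonal (c *\<^sub>R x - c *\<^sub>R p x) w" unfolding orthogonal_def
        by (simp add: inner_diff_left)
    qed
  qed
  have quniq: "u1 = u2" if "u1 \<in> W" "u2 \<in> W" "A *v u1 = A *v u2" for u1 u2
  proof -
    have d: "u1 - u2 \<in> W" using subW that by (simp add: subspace_diff)
    then obtain z where z: "u1 - u2 = A *v z" unfolding W_def by auto
    have "(u1 - u2) \<bullet> (u1 - u2) = (A *v (u1 - u2)) \<bullet> z"
      using z symm_dot[OF sA] by (simp add: inner_commute)
    also have "\<dots> = 0" using that(3) by (simp add: matrix_vector_mult_diff_distrib)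
    finally show ?thesis by simp
  qed
  define q where "q y = p (SOME v. A *v v = p y)" for y
  have qspec: "q y \<in> W \<and> A *v q y = p y" for y
  proof -
    obtain v where "A *v v = p y" using p(1)[of y] unfolding W_def by auto
    then have "A *v (SOME v. A *v v = p y) = p y" by (metis (mono_tags) someI)
    then show ?thesis unfolding q_def using p(1) Ap by simp
  qed
  have qlin: "linear q"
  proof (rule linearI)
    fix x y
    show "q (x + y) = q x + q y"
      apply (rule quniq)
      using qspec subW apply (auto simp: subspace_add)
      by (simp add: matrix_vector_right_distrib linear_add[OF plin])
  next
    fix c x
    show "q (c *\<^sub>R x) = c *\<^sub>R q x"
      apply (rule quniq)
      using qspec subW apply (auto simp: subspace_scale)
      by (simp add: matrix_vector_mult_scaleR linear_scale[OF plin])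
  qed
  define X where "X = matrix q"
  have Xv: "X *v y = q y" for y unfolding X_def using qlin by (simp add: matrix_works)
  have psym: "p x \<bullet> y = x \<bullet> p y" for x y
  proof -
    have "p x \<bullet> y = p x \<bullet> p y + p x \<bullet> (y - p y)" by (simp add: inner_diff_right)
    also have "p x \<bullet> (y - p y) = 0" using p by (simp add: orthogonal_def inner_commute)
    moreover have "x \<bullet> p y = p x \<bullet> p y + (x - p x) \<bullet> p y" by (simp add: inner_diff_left)
    moreover have "(x - p x) \<bullet> p y = 0" using p by (simp add: orthogonal_def)
    ultimately show ?thesis by simp
  qed
  have AX: "(A ** X) *v y = p y" for y
    by (simp add: matrix_vector_mul_assoc[symmetric] Xv qspec)
  have XA: "(X ** A) *v y = p y" for y
  proof -
    have "q (A *v y) = p y"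
      apply (rule quniq) using qspec p(1) Ap pW unfolding W_def by auto
    then show ?thesis by (simp add: matrix_vector_mul_assoc[symmetric] Xv)
  qed
  have "A ** X ** A = A"
    unfolding matrix_eq by (simp add: matrix_vector_mul_assoc[symmetric] Xv qspec pW W_def)
  moreover have "X ** A ** X = X"
  proof -
    have "q (p y) = q y" for y
      apply (rule quniq) using qspec pW p(1) by auto
    then show ?thesis unfolding matrix_eq
      by (simp add: matrix_vector_mul_assoc[symmetric] Xv qspec)
  qed
  moreover have "transpose (A ** X) = A ** X"
    by (rule transpose_eq_by_inner) (simp add: AX psym)
  moreover have "transpose (X ** A) = X ** A"
    by (rule transpose_eq_by_inner) (simp add: XA psym)
  ultimately show ?thesis unfolding penrose_def by blast
qed

lemma pinv_symm:
  fixes A :: "real^'n^'n"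
  assumes "symm A"
  shows "penrose A (pinv A)"
proof -
  obtain X where X: "penrose A X" using penrose_exists_symm[OF assms] by blast
  have "pinv A = X" unfolding pinv_def
    apply (rule the_equality)
    using X penrose_unique unfolding penrose_def by blast+
  then show ?thesis using X by simp
qed

lemma sum_UNIV_Plus: "(\<Sum>k\<in>(UNIV::('a::finite+'b::finite) set). f k) = (\<Sum>i\<in>UNIV. f (Inl i)) + (\<Sum>j\<in>UNIV. f (Inr j))"
  using sum.Plus[of "UNIV::'a set" "UNIV::'b set" f] by (simp add: comp_def)

definition inl :: "real^'q \<Rightarrow> real^('q::finite+'r::finite)" where
  "inl x = (\<chi> k. case k of Inl i \<Rightarrow> x$i | Inr _ \<Rightarrow> 0)"
definition inr :: "real^'r \<Rightarrow> real^('q::finite+'r::finite)" where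
  "inr y = (\<chi> k. case k of Inl _ \<Rightarrow> 0 | Inr i \<Rightarrow> y$i)"
definition lft :: "real^('q::finite+'r::finite) \<Rightarrow> real^'q" where
  "lft w = (\<chi> i. w $ Inl i)"
definition rgt :: "real^('q::finite+'r::finite) \<Rightarrow> real^'r" where
  "rgt w = (\<chi> i. w $ Inr i)"

lemma inl_comp[simp]: "inl x $ Inl i = x $ i" "inl x $ Inr j = 0"
  by (simp_all add: inl_def)
lemma inr_comp[simp]: "inr y $ Inl i = 0" "inr y $ Inr j = y $ j"
  by (simp_all add: inr_def)
lemma lft_comp[simp]: "lft w $ i = w $ Inl i" by (simp add: lft_def)
lemma rgt_comp[simp]: "rgt w $ i = w $ Inr i" by (simp add: rgt_def)

lemma lr_simps[simp]: "lft (inl x) = x" "rgt (inl x) = 0" "lft (inr y) = 0" "rgt (inr y) = y"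
  by (simp_all add: vec_eq_iff)

lemma w_split: "w = inl (lft w) + inr (rgt w)"
  by (auto simp: vec_eq_iff inl_def inr_def split: sum.split)

lemma inl_lin[simp]: "inl (a + b) = inl a + inl b" "inl (c *\<^sub>R a) = c *\<^sub>R inl a" "inl 0 = 0"
   "inl (a - b) = inl a - inl b" "inl (-a) = - inl a"
  by (auto simp: vec_eq_iff inl_def split: sum.split)
lemma inr_lin[simp]: "inr (a + b) = inr a + inr b" "inr (c *\<^sub>R a) = c *\<^sub>R inr a" "inr 0 = 0"
   "inr (a - b) = inr a - inr b" "inr (-a) = - inr a"
  by (auto simp: vec_eq_iff inr_def split: sum.split)
lemma lft_lin[simp]: "lft (a + b) = lft a + lft b" "lft (c *\<^sub>R a) = c *\<^sub>R lft a" "lft 0 = 0"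
   "lft (a - b) = lft a - lft b"
  by (simp_all add: vec_eq_iff)
lemma rgt_lin[simp]: "rgt (a + b) = rgt a + rgt b" "rgt (c *\<^sub>R a) = c *\<^sub>R rgt a" "rgt 0 = 0"
   "rgt (a - b) = rgt a - rgt b"
  by (simp_all add: vec_eq_iff)

lemma inner_split: "u \<bullet> v = lft u \<bullet> lft v + rgt u \<bullet> rgt v"
  by (simp add: inner_vec_def sum_UNIV_Plus)

lemma inner_inl_inr[simp]: "inl x \<bullet> inr y = 0" "inr y \<bullet> inl x = 0"
  "inl x \<bullet> inl x' = x \<bullet> x'" "inr y \<bullet> inr y' = y \<bullet> y'"
  by (simp_all add: inner_split[of "inl x"] inner_split[of "inr y"])

lemma norm_inl[simp]: "norm (inl x) = norm x" and norm_inr[simp]: "norm (inr y) = norm y"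
  by (simp_all add: norm_eq_sqrt_inner)

lemma lft_mult: "lft (N *v w) = blk11 N *v lft w + blk12 N *v rgt w"
  by (simp add: vec_eq_iff matrix_vector_mult_def blk11_def blk12_def sum_UNIV_Plus)
lemma rgt_mult: "rgt (N *v w) = blk21 N *v lft w + blk22 N *v rgt w"
  by (simp add: vec_eq_iff matrix_vector_mult_def blk21_def blk22_def sum_UNIV_Plus)

lemma sum_delta_mult: "(\<Sum>j\<in>UNIV. (if i = j then c else 0) * (x::real^'n) $ j) = c * x $ i"
proof -
  have "(\<Sum>j\<in>UNIV. (if i = j then c else 0) * x $ j) = (\<Sum>j\<in>UNIV. if i = j then c * x $ j else 0)"
    by (rule sum.cong) auto
  then show ?thesis by simp
qed

lemma stack_mult: "stackIZ Z *v x = inl x + inr (Z *v x)"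
proof -
  have "(stackIZ Z *v x) $ Inl i = x $ i" for i
    using sum_delta_mult[of i 1 x] by (simp add: stackIZ_def matrix_vector_mult_def)
  moreover have "(stackIZ Z *v x) $ Inr i = (Z *v x) $ i" for i
    by (simp add: stackIZ_def matrix_vector_mult_def)
  ultimately show ?thesis by (auto simp: vec_eq_iff inl_def inr_def split: sum.split)
qed

lemma betaI0_mult: "betaI0 b *v w = b *\<^sub>R inl (lft w)"
proof -
  have "(betaI0 b *v w) $ Inl i = b * w $ Inl i" for i
    using sum_delta_mult[of i b "lft w"] by (simp add: betaI0_def matrix_vector_mult_def sum_UNIV_Plus)
  moreover have "(betaI0 b *v w) $ Inr i = 0" for i
    by (simp add: betaI0_def matrix_vector_mult_def sum_UNIV_Plus)
  ultimately show ?thesis by (auto simp: vec_eq_iff inl_def split: sum.split)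
qed

lemma symm_betaI0: "symm (betaI0 b)"
  by (auto simp: symm_def betaI0_def transpose_def vec_eq_iff split: sum.split)

lemma quad_sandwich: fixes S :: "real^'q^'n" and N :: "real^'n^'n" shows "x \<bullet> ((transpose S ** N ** S) *v x) = (S *v x) \<bullet> (N *v (S *v x))"
proof -
  have "x \<bullet> ((transpose S ** N ** S) *v x) = x \<bullet> (transpose S *v (N *v (S *v x)))"
    by (simp add: matrix_vector_mul_assoc[symmetric])
  also have "\<dots> = (S *v x) \<bullet> (N *v (S *v x))"
    using dot_transpose[of "transpose S" x] by simp
  finally show ?thesis .
qed

lemma symm_sandwich: "symm N \<Longrightarrow> symm (transpose S ** N ** S)"
  unfolding symm_def by (simp add: matrix_transpose_mul matrix_mul_assoc)

lemma symm_blk22: "symm N \<Longrightarrow> symm (blk22 N)"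
  unfolding symm_def by (auto simp: blk22_def transpose_def vec_eq_iff dest: arg_cong[where f="\<lambda>A. A $ _ $ _"])

lemma disc_nonneg_coeff:
  fixes a b c :: real
  assumes "\<forall>t. 0 \<le> c + t*a + t^2*b"
  shows "b \<ge> 0"
proof (rule ccontr)
  assume "\<not> b \<ge> 0" then have d: "b < 0" by simp
  define s where "s = max 1 ((\<bar>a\<bar> + \<bar>c\<bar> + 1) / (-b))"
  have s1: "s \<ge> 1" unfolding s_def by simp
  have "s \<ge> (\<bar>a\<bar> + \<bar>c\<bar> + 1) / (-b)" unfolding s_def by simp
  then have "-b * s \<ge> \<bar>a\<bar> + \<bar>c\<bar> + 1" using d by (simp add: field_simps)
  then have "s * (\<bar>a\<bar> + \<bar>c\<bar> + 1) \<le> s * (-b * s)" using s1 by (intro mult_left_mono) auto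
  then have h3: "s^2 * b \<le> - (s * \<bar>a\<bar>) - s * \<bar>c\<bar> - s"
    by (simp add: power2_eq_square algebra_simps)
  moreover have "s * a \<le> s * \<bar>a\<bar>" using s1 by (simp add: mult_left_mono)
  moreover have "c \<le> s * \<bar>c\<bar>" using s1
    by (smt (verit) abs_ge_self mult_le_cancel_right1 abs_ge_zero)
  ultimately have "c + s*a + s^2*b < 0" using s1 by linarith
  with assms show False by (smt (verit))
qed

lemma disc_le:
  fixes a b c :: real
  assumes "\<forall>t. 0 \<le> c + t*a + t^2*b"
  shows "a^2 \<le> 4*b*c"
proof -
  have b: "b \<ge> 0" using disc_nonneg_coeff[OF assms] .
  show ?thesis
  proof (cases "b = 0")
    case True
    then have h: "\<forall>t. 0 \<le> c + t*a" using assms by simp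
    have "a = 0"
    proof (rule ccontr)
      assume "a \<noteq> 0"
      then have "0 \<le> c + (-(\<bar>c\<bar>+1)/a)*a" using h by blast
      with \<open>a \<noteq> 0\<close> show False by simp
    qed
    then show ?thesis using True by simp
  next
    case False
    then have bp: "b > 0" using b by simp
    have "0 \<le> c + (-a/(2*b))*a + (-a/(2*b))^2*b" using assms by blast
    also have "\<dots> = c - a^2/(4*b)" using bp by (simp add: field_simps power2_eq_square)
    finally show ?thesis using bp by (simp add: field_simps)
  qed
qed

lemma quad_expand:
  fixes P :: "real^'n^'n"
  shows "(u + t *\<^sub>R x) \<bullet> (P *v (u + t *\<^sub>R x)) = u \<bullet> (P *v u) + t * (u \<bullet> (P *v x) + x \<bullet> (P *v u)) + t^2 * (x \<bullet> (P *v x))"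
  by (simp add: matrix_vector_right_distrib matrix_vector_mult_scaleR inner_add_left inner_add_right
      algebra_simps power2_eq_square)

lemma psd_cs:
  assumes "psd P"
  shows "(u \<bullet> ((P::real^'n^'n) *v x))^2 \<le> (u \<bullet> (P *v u)) * (x \<bullet> (P *v x))"
proof -
  have s: "x \<bullet> (P *v u) = u \<bullet> (P *v x)"
    using assms symm_dot[of P x u] unfolding psd_def by (simp add: inner_commute)
  have "\<forall>t. 0 \<le> u \<bullet> (P *v u) + t * (2 * (u \<bullet> (P *v x))) + t^2 * (x \<bullet> (P *v x))"
    using assms quad_expand[of u _ x P] s unfolding psd_def by (metis mult_2)
  from disc_le[OF this] show ?thesis by (simp add: power2_eq_square algebra_simps)
qed

lemma psd_zero:
  assumes "psd P" "x \<bullet> ((P::real^'n^'n) *v x) = 0"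
  shows "P *v x = 0"
proof -
  have "((P *v x) \<bullet> (P *v (P *v x)))*(x \<bullet> (P *v x)) \<ge> ((P *v x) \<bullet> (P *v x))^2"
    using psd_cs[OF assms(1), of "P *v x" x] by simp
  with assms(2) have "((P *v x) \<bullet> (P *v x))^2 \<le> 0" by simp
  then show ?thesis by simp
qed

lemma psd_neg_loewner: "loewner_le A 0 \<longleftrightarrow> psd (- A)"
  by (simp add: loewner_le_def)

lemma mvm_neg: "(- A) *v x = - (A *v (x::real^'n))"
  by (simp add: vec_eq_iff matrix_vector_mult_def sum_negf)

lemma psd_negI: "psd (- A) \<Longrightarrow> x \<bullet> (A *v x) \<le> (0::real)"
  unfolding psd_def using mvm_neg[of A x] by (metis inner_minus_right neg_0_le_iff_le)

lemma mvm_diff_scale: "(A - c *\<^sub>R B) *v (x::real^'n) = A *v x - c *\<^sub>R (B *v x)"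
  by (simp add: vec_eq_iff matrix_vector_mult_def sum_subtractf sum_distrib_left algebra_simps)

lemma mvm_diff: "(A - B) *v (x::real^'n) = A *v x - B *v x"
  by (simp add: vec_eq_iff matrix_vector_mult_def sum_subtractf algebra_simps)

lemma quad_roots:
  fixes gu gv b :: real
  assumes "gu < 0" "gv > 0"
  shows "\<exists>t1 t2. t1 < 0 \<and> 0 < t2 \<and> gu + t1*b + t1^2*gv = 0 \<and> gu + t2*b + t2^2*gv = 0"
proof -
  define D where "D = b^2 - 4*gu*gv"
  have Dp: "D > b^2" using assms unfolding D_def by (simp add: mult_neg_pos)
  define r where "r = sqrt D"
  have D0: "D \<ge> 0" using Dp by (smt (verit) zero_le_power2)
  have r2: "r^2 = D" unfolding r_def using D0 by simp
  have rb: "r > \<bar>b\<bar>" unfolding r_def using Dp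
    by (metis abs_ge_zero power2_abs real_less_rsqrt)
  define t1 where "t1 = (-b - r)/(2*gv)"
  define t2 where "t2 = (-b + r)/(2*gv)"
  have "t1 < 0" unfolding t1_def using rb assms by (simp add: divide_neg_pos)
  moreover have "t2 > 0" unfolding t2_def using rb assms by simp
  moreover have "gu + t1*b + t1^2*gv = 0"
  proof -
    have "4*gv*(gu + t1*b + t1^2*gv) = 4*gu*gv + 2*(-b - r)*b + (-b - r)^2"
      unfolding t1_def using assms by (simp add: field_simps power2_eq_square)
    also have "\<dots> = 0" using r2 unfolding D_def by (simp add: algebra_simps power2_eq_square)
    finally show ?thesis using assms by simp
  qed
  moreover have "gu + t2*b + t2^2*gv = 0"
  proof -
    have "4*gv*(gu + t2*b + t2^2*gv) = 4*gu*gv + 2*(-b + r)*b + (-b + r)^2"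
      unfolding t2_def using assms by (simp add: field_simps power2_eq_square)
    also have "\<dots> = 0" using r2 unfolding D_def by (simp add: algebra_simps power2_eq_square)
    finally show ?thesis using assms by simp
  qed
  ultimately show ?thesis by blast
qed

lemma s_pair:
  fixes A B :: "real^'n^'n"
  assumes hyp: "\<And>w. w \<bullet> (B *v w) \<ge> 0 \<Longrightarrow> w \<bullet> (A *v w) \<ge> 0"
    and gu: "u \<bullet> (B *v u) < 0" and gv: "v \<bullet> (B *v v) > 0"
  shows "(u \<bullet> (A *v u)) * (v \<bullet> (B *v v)) \<ge> (v \<bullet> (A *v v)) * (u \<bullet> (B *v u))"
proof -
  define fu fv ggu ggv a b where "fu = u \<bullet> (A *v u)" "fv = v \<bullet> (A *v v)"
    "ggu = u \<bullet> (B *v u)" "ggv = v \<bullet> (B *v v)"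
    "a = u \<bullet> (A *v v) + v \<bullet> (A *v u)" "b = u \<bullet> (B *v v) + v \<bullet> (B *v u)"
  have F: "(u + t *\<^sub>R v) \<bullet> (A *v (u + t *\<^sub>R v)) = fu + t*a + t^2*fv" for t
    unfolding fu_fv_ggu_ggv_a_b_def quad_expand by simp
  have G: "(u + t *\<^sub>R v) \<bullet> (B *v (u + t *\<^sub>R v)) = ggu + t*b + t^2*ggv" for t
    unfolding fu_fv_ggu_ggv_a_b_def quad_expand by simp
  obtain t1 t2 where t: "t1 < 0" "0 < t2" "ggu + t1*b + t1^2*ggv = 0" "ggu + t2*b + t2^2*ggv = 0"
    using quad_roots[of ggu ggv b] gu gv unfolding fu_fv_ggu_ggv_a_b_def by blast
  have Ft1: "fu + t1*a + t1^2*fv \<ge> 0" using hyp[of "u + t1 *\<^sub>R v"] F G t by simp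
  have Ft2: "fu + t2*a + t2^2*fv \<ge> 0" using hyp[of "u + t2 *\<^sub>R v"] F G t by simp
  have gvp: "ggv > 0" using gv unfolding fu_fv_ggu_ggv_a_b_def by simp
  define c0 c1 where "c0 = ggv*fu - fv*ggu" "c1 = ggv*a - fv*b"
  have H: "ggv * (fu + t*a + t^2*fv) - fv * (ggu + t*b + t^2*ggv) = c0 + t*c1" for t
    unfolding c0_c1_def by (simp add: algebra_simps)
  have "c0 + t1*c1 = ggv * (fu + t1*a + t1^2*fv)" using H[of t1] t(3) by simp
  then have h1: "c0 + t1*c1 \<ge> 0" using Ft1 gvp by simp
  have "c0 + t2*c1 = ggv * (fu + t2*a + t2^2*fv)" using H[of t2] t(4) by simp
  then have h2: "c0 + t2*c1 \<ge> 0" using Ft2 gvp by simp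
  have "t2 * (c0 + t1*c1) \<ge> 0" using h1 t(2) by simp
  moreover have "(-t1) * (c0 + t2*c1) \<ge> 0" using mult_nonneg_nonneg[of "-t1" "c0+t2*c1"] h2 t(1) by simp
  ultimately have "t2 * (c0 + t1*c1) + (-t1) * (c0 + t2*c1) \<ge> 0" by linarith
  then have "(t2 - t1) * c0 \<ge> 0" by (simp add: algebra_simps)
  then have "c0 \<ge> 0" using t(1,2) by (simp add: zero_le_mult_iff)
  then show ?thesis unfolding c0_c1_def fu_fv_ggu_ggv_a_b_def by (simp add: mult.commute)
qed

lemma s_lemma:
  fixes A B :: "real^'n^'n"
  assumes ex: "\<exists>v. v \<bullet> (B *v v) > 0"
    and hyp: "\<And>w. w \<bullet> (B *v w) \<ge> 0 \<Longrightarrow> w \<bullet> (A *v w) \<ge> 0"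
  shows "\<exists>\<alpha>\<ge>0. \<forall>w. w \<bullet> ((A - \<alpha> *\<^sub>R B) *v w) \<ge> 0"
proof -
  define f where "f w = w \<bullet> (A *v w)" for w
  define g where "g w = w \<bullet> (B *v w)" for w
  define S where "S = {f v / g v | v. g v > 0}"
  have Sne: "S \<noteq> {}" using ex unfolding S_def g_def by auto
  have S0: "\<And>s. s \<in> S \<Longrightarrow> 0 \<le> s" unfolding S_def f_def g_def using hyp
    by (auto intro!: divide_nonneg_pos)
  have bdd: "bdd_below S" by (meson S0 bdd_belowI)
  define \<alpha> where "\<alpha> = Inf S"
  have a0: "\<alpha> \<ge> 0" unfolding \<alpha>_def using Sne S0 by (intro cInf_greatest) auto
  have pos: "f w - \<alpha> * g w \<ge> 0" if "g w > 0" for w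
  proof -
    have "\<alpha> \<le> f w / g w" unfolding \<alpha>_def using bdd that by (intro cInf_lower) (auto simp: S_def)
    then show ?thesis using that by (simp add: field_simps)
  qed
  have neg: "f w - \<alpha> * g w \<ge> 0" if "g w < 0" for w
  proof -
    have "f w / g w \<le> \<alpha>" unfolding \<alpha>_def
    proof (rule cInf_greatest[OF Sne])
      fix s assume "s \<in> S"
      then obtain v where v: "s = f v / g v" "g v > 0" unfolding S_def by auto
      have "f w * g v \<ge> f v * g w" using s_pair[of B A w v] hyp that v(2) unfolding f_def g_def by blast
      have "f w / g w - f v / g v = (f w * g v - f v * g w)/(g w * g v)"
        using v that by (simp add: field_simps)
      moreover have "(f w * g v - f v * g w)/(g w * g v) \<le> 0"
        using \<open>f w * g v \<ge> f v * g w\<close> v that by (intro divide_nonneg_neg) (auto simp: mult_neg_pos)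
      ultimately show "f w / g w \<le> s" using v by simp
    qed
    then show ?thesis using that by (simp add: field_simps)
  qed
  have "w \<bullet> ((A - \<alpha> *\<^sub>R B) *v w) \<ge> 0" for w
  proof -
    have e: "w \<bullet> ((A - \<alpha> *\<^sub>R B) *v w) = f w - \<alpha> * g w"
      unfolding f_def g_def mvm_diff_scale by (simp add: inner_diff_right)
    show ?thesis unfolding e
      using pos[of w] neg[of w] hyp[of w] unfolding f_def g_def
      by (cases "w \<bullet> (B *v w)" "0::real" rule: linorder_cases) auto
  qed
  then show ?thesis using a0 by blast
qed

lemma tr3: "transpose ((A::real^_^_) ** B ** C) = transpose C ** transpose B ** transpose A"
  by (simp add: matrix_transpose_mul matrix_mul_assoc)

lemma penrose_transpose: "penrose A X \<Longrightarrow> penrose (transpose A) (transpose X)"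
  unfolding penrose_def
proof (elim conjE, intro conjI)
  assume h: "A ** X ** A = A" "X ** A ** X = X" "transpose (A ** X) = A ** X" "transpose (X ** A) = X ** A"
  show "transpose A ** transpose X ** transpose A = transpose A" using tr3[of A X A] h by simp
  show "transpose X ** transpose A ** transpose X = transpose X" using tr3[of X A X] h by simp
  show "transpose (transpose A ** transpose X) = transpose A ** transpose X"
    using h(4) by (simp add: matrix_transpose_mul)
  show "transpose (transpose X ** transpose A) = transpose X ** transpose A"
    using h(3) by (simp add: matrix_transpose_mul)
qed

lemma mmul_neg: "(A::real^'n^'m) ** (- B) = - (A ** B)"
  by (simp add: vec_eq_iff matrix_matrix_mult_def sum_negf)

lemma pinv_sym_symm:
  fixes A :: "real^'n^'n"
  assumes "symm A" shows "transpose (pinv A) = pinv A"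
  using penrose_unique[OF penrose_transpose[OF pinv_symm[OF assms]]] pinv_symm[OF assms] assms
  unfolding symm_def by simp

lemma blk21_transpose: "symm N \<Longrightarrow> blk21 N = transpose (blk12 N)"
  unfolding symm_def by (auto simp: blk21_def blk12_def transpose_def vec_eq_iff dest: arg_cong[where f="\<lambda>A. A $ _ $ _"])

definition outer :: "real^'r \<Rightarrow> real^'q \<Rightarrow> real^'q^'r" where
  "outer e v = (\<chi> i j. e $ i * v $ j)"

lemma outer_mult: "outer e v *v u = (v \<bullet> u) *\<^sub>R e"
  by (simp add: vec_eq_iff outer_def matrix_vector_mult_def inner_vec_def sum_distrib_left algebra_simps)

lemma mvm_add: "(A + B) *v (x::real^'n) = A *v x + B *v x"
  by (simp add: vec_eq_iff matrix_vector_mult_def sum.distrib algebra_simps)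

lemma mvm_negv: "A *v (- x) = - (A *v (x::real^'n))"
  by (simp add: vec_eq_iff matrix_vector_mult_def sum_negf)

locale PiN =
  fixes N :: "real^('q::finite + 'r::finite)^('q + 'r)"
  assumes sN: "symm N" and NPi: "N \<in> PiSet"
begin

definition "X = pinv (blk22 N)"
definition "Z0 = - (X ** blk21 N)"
definition "P = schur N"
definition "g w = w \<bullet> (N *v w)"

lemma s22: "symm (blk22 N)" using symm_blk22[OF sN] .
lemma pen: "penrose (blk22 N) X" unfolding X_def using pinv_symm[OF s22] .
lemma Xsym: "transpose X = X" unfolding X_def using pinv_sym_symm[OF s22] .
lemma kerN: "blk22 N *v v = 0 \<Longrightarrow> blk12 N *v v = 0" using NPi unfolding PiSet_def by auto
lemma N22neg: "psd (- blk22 N)" using NPi unfolding PiSet_def loewner_le_def by auto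
lemma Ppsd: "psd P" using NPi unfolding PiSet_def P_def by auto

lemma N12X: "blk12 N ** X ** blk22 N = blk12 N"
proof -
  have "blk22 N ** X ** blk22 N = blk22 N" using pen unfolding penrose_def by auto
  have "blk12 N *v (v - (X ** blk22 N) *v v) = 0" for v
  proof (rule kerN)
    have "blk22 N *v ((X ** blk22 N) *v v) = (blk22 N ** X ** blk22 N) *v v"
      by (simp add: matrix_vector_mul_assoc matrix_mul_assoc)
    then show "blk22 N *v (v - (X ** blk22 N) *v v) = 0"
      using \<open>blk22 N ** X ** blk22 N = blk22 N\<close> by (simp add: matrix_vector_mult_diff_distrib)
  qed
  then show ?thesis unfolding matrix_eq
    by (simp add: matrix_vector_mult_diff_distrib matrix_vector_mul_assoc[symmetric] matrix_mul_assoc)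
qed

lemma N22Z0: "blk22 N ** Z0 = - blk21 N"
proof -
  have "transpose (blk12 N ** X ** blk22 N) = blk22 N ** X ** blk21 N"
    using Xsym s22 blk21_transpose[OF sN] unfolding symm_def
    by (simp add: matrix_transpose_mul matrix_mul_assoc)
  then have "blk22 N ** X ** blk21 N = blk21 N"
    using N12X blk21_transpose[OF sN] by simp
  then show ?thesis unfolding Z0_def
    by (simp add: mmul_neg matrix_mul_assoc)
qed

lemma Nw0: "N *v (inl x + inr (Z0 *v x)) = inl (P *v x)"
proof -
  have l: "lft (N *v (inl x + inr (Z0 *v x))) = P *v x"
    unfolding lft_mult P_def schur_def Z0_def X_def
    by (simp add: mvm_neg mvm_negv mvm_diff matrix_vector_mul_assoc[symmetric])
  have r: "rgt (N *v (inl x + inr (Z0 *v x))) = 0"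
    unfolding rgt_mult using N22Z0
    by (simp add: matrix_vector_mul_assoc mvm_neg)
  show ?thesis using w_split[of "N *v (inl x + inr (Z0 *v x))"] l r by simp
qed

lemma inr_N_inr: "inr e \<bullet> (N *v inr e) = e \<bullet> (blk22 N *v e)"
  by (simp add: inner_split[of "inr e"] rgt_mult)

lemma gform: "g (inl x + inr (Z0 *v x + e)) = x \<bullet> (P *v x) + e \<bullet> (blk22 N *v e)"
proof -
  define w0 where "w0 = inl x + inr (Z0 *v x)"
  have v: "inl x + inr (Z0 *v x + e) = w0 + inr e" unfolding w0_def by simp
  have a: "w0 \<bullet> (N *v w0) = x \<bullet> (P *v x)" unfolding w0_def Nw0 by (simp add: inner_add_left)
  have b: "w0 \<bullet> (N *v inr e) = 0"
    using symm_dot[OF sN, of w0 "inr e"] Nw0 unfolding w0_def by simp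
  have c: "inr e \<bullet> (N *v w0) = 0" unfolding w0_def Nw0 by simp
  show ?thesis unfolding g_def v
    by (simp add: matrix_vector_right_distrib inner_add_left inner_add_right a b c inr_N_inr)
qed

lemma gform': "g w = lft w \<bullet> (P *v lft w) + (rgt w - Z0 *v lft w) \<bullet> (blk22 N *v (rgt w - Z0 *v lft w))"
  using gform[of "lft w" "rgt w - Z0 *v lft w"] w_split[of w] by simp

lemma g_stack: "u \<bullet> ((transpose (stackIZ Z) ** N ** stackIZ Z) *v u) = g (inl u + inr (Z *v u))"
  unfolding quad_sandwich g_def stack_mult ..

lemma lift:
  assumes x: "lft w \<noteq> 0" and gw: "g w \<ge> 0"
  shows "\<exists>Z \<in> Zset N. Z *v lft w = rgt w"
proof -
  define x where "x = lft w"
  define e where "e = rgt w - Z0 *v x"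
  define k where "k = e \<bullet> (blk22 N *v e)"
  have k0: "k \<le> 0" unfolding k_def using psd_negI[OF N22neg] .
  have kP: "x \<bullet> (P *v x) + k \<ge> 0" using gw gform' unfolding k_def e_def x_def by simp
  have P0: "x \<bullet> (P *v x) \<ge> 0" using Ppsd unfolding psd_def by auto
  have Psym: "(P *v a) \<bullet> b = a \<bullet> (P *v b)" for a b using Ppsd symm_dot unfolding psd_def by blast
  define v where "v = (if x \<bullet> (P *v x) > 0 then (1 / (x \<bullet> (P *v x))) *\<^sub>R (P *v x) else (1 / (x \<bullet> x)) *\<^sub>R x)"
  have vx: "v \<bullet> x = 1"
    using x unfolding v_def x_def[symmetric] by (simp add: Psym inner_commute)
  define Z where "Z = Z0 + outer e v"
  have Zu: "Z *v u = Z0 *v u + (v \<bullet> u) *\<^sub>R e" for u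
    unfolding Z_def by (simp add: mvm_add outer_mult)
  have gu: "g (inl u + inr (Z *v u)) = u \<bullet> (P *v u) + (v \<bullet> u)^2 * k" for u
    unfolding Zu gform k_def by (simp add: matrix_vector_mult_scaleR power2_eq_square algebra_simps)
  have nonneg: "u \<bullet> (P *v u) + (v \<bullet> u)^2 * k \<ge> 0" for u
  proof (cases "x \<bullet> (P *v x) > 0")
    case True
    define p where "p = x \<bullet> (P *v x)"
    have True': "p > 0" using True unfolding p_def .
    have vu: "v \<bullet> u = (u \<bullet> (P *v x)) / p" using True unfolding v_def p_def
      by (simp add: Psym inner_commute)
    have cs: "(u \<bullet> (P *v x))^2 \<le> (u \<bullet> (P *v u)) * p" using psd_cs[OF Ppsd] unfolding p_def .
    have "- (u \<bullet> (P *v u)) \<le> - ((u \<bullet> (P *v x))^2) / p" using cs True' by (simp add: field_simps)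
    also have "\<dots> = (v \<bullet> u)^2 * (- p)"
      unfolding vu using True' by (simp add: power2_eq_square field_simps)
    also have "\<dots> \<le> (v \<bullet> u)^2 * k" using kP unfolding p_def by (intro mult_left_mono) auto
    finally show ?thesis by simp
  next
    case False
    then have "k = 0" using P0 kP k0 by simp
    then show ?thesis using Ppsd unfolding psd_def by simp
  qed
  have "Z \<in> Zset N" unfolding Zset_def psd_def
    using symm_sandwich[OF sN] g_stack gu nonneg by simp
  moreover have "Z *v x = rgt w" unfolding Zu vx e_def by simp
  ultimately show ?thesis unfolding x_def by blast
qed

end

lemma cont_lft: "continuous_on S (lft :: real^('q::finite+'r::finite) \<Rightarrow> real^'q)"
  unfolding lft_def by (intro continuous_intros continuous_on_component)
lemma cont_rgt: "continuous_on S (rgt :: real^('q::finite+'r::finite) \<Rightarrow> real^'r)"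
  unfolding rgt_def by (intro continuous_intros continuous_on_component)
lemma cont_quad: "continuous_on S (\<lambda>w. w \<bullet> ((A::real^'n^'n) *v w))"
  by (intro continuous_on_inner continuous_on_id matrix_vector_mult_linear_continuous_on)

lemma quad_add_null:
  assumes "symm A" "A *v z = 0"
  shows "(w + z) \<bullet> (A *v (w + z)) = w \<bullet> (A *v (w::real^'n))"
proof -
  have "z \<bullet> (A *v w) = 0" using symm_dot[OF assms(1), of z w] assms(2) by simp
  then show ?thesis using assms(2)
    by (simp add: matrix_vector_right_distrib inner_add_left inner_add_right)
qed

lemma inr_A_inr: "inr e \<bullet> (A *v inr e) = e \<bullet> (blk22 A *v e)"
  by (simp add: inner_split[of "inr e"] rgt_mult)

locale PiNM = PiN N for N :: "real^('q::finite + 'r::finite)^('q + 'r)" +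
  fixes M :: "real^('q + 'r)^('q + 'r)"
  assumes sM: "symm M" and M22: "loewner_le (blk22 M) 0" and incl: "Zset N \<subseteq> Zset_plus M"
begin

definition "f w = w \<bullet> (M *v w)"

lemma fpos: assumes "lft w \<noteq> 0" "g w \<ge> 0" shows "f w > 0"
proof -
  obtain Z where Z: "Z \<in> Zset N" "Z *v lft w = rgt w" using lift[OF assms] by blast
  then have "pd (transpose (stackIZ Z) ** M ** stackIZ Z)" using incl unfolding Zset_plus_def by auto
  then have "0 < lft w \<bullet> ((transpose (stackIZ Z) ** M ** stackIZ Z) *v lft w)"
    using assms(1) unfolding pd_def by blast
  also have "\<dots> = f w" unfolding quad_sandwich stack_mult Z(2) f_def using w_split[of w] by simp
  finally show ?thesis .
qed

lemma N_inr_null: assumes "blk22 N *v y = 0" shows "N *v inr y = 0"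
proof -
  have "lft (N *v inr y) = 0" "rgt (N *v inr y) = 0"
    using kerN[OF assms] assms by (simp_all add: lft_mult rgt_mult)
  then show ?thesis using w_split[of "N *v inr y"] by simp
qed

lemma kernull_aux:
  assumes y: "blk22 N *v y = 0" and x: "x \<noteq> 0"
  shows "y \<bullet> (blk22 M *v y) = 0 \<and> (M *v inr y) \<bullet> (inl x + inr (Z0 *v x)) = 0"
proof -
  define w0 where "w0 = inl x + inr (Z0 *v x)"
  define d where "d = y \<bullet> (blk22 M *v y)"
  define c where "c = w0 \<bullet> (M *v inr y) + inr y \<bullet> (M *v w0)"
  have gw0: "g w0 \<ge> 0" using gform[of x 0] Ppsd unfolding w0_def psd_def by simp
  have "\<forall>s. 0 \<le> f w0 + s * c + s^2 * d"
  proof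
    fix s
    have "g (w0 + s *\<^sub>R inr y) = g w0" unfolding g_def
      using quad_add_null[OF sN, of "s *\<^sub>R inr y" w0] N_inr_null[OF y]
      by (simp add: matrix_vector_mult_scaleR)
    then have "f (w0 + s *\<^sub>R inr y) > 0" using fpos[of "w0 + s *\<^sub>R inr y"] gw0 x unfolding w0_def by simp
    then show "0 \<le> f w0 + s * c + s^2 * d"
      unfolding f_def quad_expand c_def d_def inr_A_inr by simp
  qed
  then have d0: "d \<ge> 0" and cd: "c^2 \<le> 4*d*f w0"
    using disc_nonneg_coeff disc_le by blast+
  have "d \<le> 0" unfolding d_def using psd_negI M22 unfolding loewner_le_def by simp
  then have "d = 0" using d0 by simp
  moreover then have "c = 0" using cd by simp
  moreover have "c = 2 * ((M *v inr y) \<bullet> w0)"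
    unfolding c_def using symm_dot[OF sM, of "inr y" w0] by (simp add: inner_commute)
  ultimately show ?thesis unfolding d_def w0_def by simp
qed

lemma kernull: assumes y: "blk22 N *v y = 0" shows "M *v inr y = 0"
proof -
  obtain i :: 'q where True by simp
  have "y \<bullet> (blk22 M *v y) = 0" using kernull_aux[OF y, of "axis i 1"] by simp
  then have "(- blk22 M) *v y = 0"
    using psd_zero[of "- blk22 M" y] M22 unfolding loewner_le_def by (simp add: mvm_neg)
  then have r: "rgt (M *v inr y) = 0" by (simp add: rgt_mult mvm_neg)
  have l: "lft (M *v inr y) = 0"
  proof (rule ccontr)
    assume h: "lft (M *v inr y) \<noteq> 0"
    have "(M *v inr y) \<bullet> (inl (lft (M *v inr y)) + inr (Z0 *v lft (M *v inr y))) = 0"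
      using kernull_aux[OF y h] by simp
    then have "lft (M *v inr y) \<bullet> lft (M *v inr y) = 0"
      using r by (simp add: inner_split[of "M *v inr y"] inner_add_right)
    then show False using h by simp
  qed
  show ?thesis using w_split[of "M *v inr y"] l r by simp
qed

definition "K = {k. blk22 N *v k = 0}"

lemma subK: "subspace K" unfolding K_def subspace_def
  by (simp add: matrix_vector_right_distrib matrix_vector_mult_scaleR)

lemma quad_scale: "(c *\<^sub>R y) \<bullet> (A *v (c *\<^sub>R y)) = c^2 * (y \<bullet> ((A::real^'n^'n) *v y))"
  by (simp add: matrix_vector_mult_scaleR power2_eq_square)

lemma mu: "\<exists>\<mu>>0. \<forall>y. (\<forall>k\<in>K. y \<bullet> k = 0) \<longrightarrow> \<mu> * (y \<bullet> y) \<le> - (y \<bullet> (blk22 N *v y))"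
proof -
  define T where "T = sphere 0 1 \<inter> (\<Inter>k\<in>K. {y. k \<bullet> y = 0})"
  have cT: "compact T" unfolding T_def compact_eq_bounded_closed
    by (auto intro!: closed_Int closed_INT closed_hyperplane bounded_Int)
  define h where "h y = - (y \<bullet> (blk22 N *v y))" for y
  have hcont: "continuous_on T h" unfolding h_def by (intro continuous_on_minus cont_quad)
  have h0: "h y \<ge> 0" for y using N22neg unfolding h_def psd_def by (simp add: mvm_neg)
  have hscale: "h (c *\<^sub>R y) = c^2 * h y" for c y unfolding h_def quad_scale by simp
  have inT: "(1 / norm y) *\<^sub>R y \<in> T" if "y \<noteq> 0" "\<forall>k\<in>K. y \<bullet> k = 0" for y
    using that unfolding T_def by (auto simp: inner_commute)
  show ?thesis
  proof (cases "T = {}")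
    case True
    have "1 * (y \<bullet> y) \<le> - (y \<bullet> (blk22 N *v y))" if "\<forall>k\<in>K. y \<bullet> k = 0" for y
      using inT[OF _ that] True by (cases "y = 0") auto
    then show ?thesis by (intro exI[of _ 1]) auto
  next
    case False
    obtain y0 where y0: "y0 \<in> T" "\<And>y. y \<in> T \<Longrightarrow> h y0 \<le> h y"
      using continuous_attains_inf[OF cT False hcont] by blast
    have "h y0 > 0"
    proof (rule ccontr)
      assume "\<not> h y0 > 0"
      then have "y0 \<bullet> ((- blk22 N) *v y0) = 0" using h0[of y0] unfolding h_def by (simp add: mvm_neg)
      then have "(- blk22 N) *v y0 = 0" using psd_zero[OF N22neg] by blast
      then have "y0 \<in> K" unfolding K_def by (simp add: mvm_neg)
      then have "y0 \<bullet> y0 = 0" using y0(1) unfolding T_def by auto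
      then show False using y0(1) unfolding T_def by simp
    qed
    moreover have "h y0 * (y \<bullet> y) \<le> h y" if "\<forall>k\<in>K. y \<bullet> k = 0" for y
    proof (cases "y = 0")
      case False
      have "h y0 \<le> h ((1 / norm y) *\<^sub>R y)" using y0(2) inT[OF False that] by blast
      also have "\<dots> = h y / (y \<bullet> y)" unfolding hscale by (simp add: power2_norm_eq_inner[symmetric] field_simps)
      finally show ?thesis using False by (simp add: field_simps)
    qed (simp add: h_def)
    ultimately show ?thesis unfolding h_def by blast
  qed
qed

lemma bound: "\<exists>R. \<forall>w. norm (lft w) = 1 \<longrightarrow> (\<forall>k\<in>K. rgt w \<bullet> k = 0) \<longrightarrow> g w \<ge> 0 \<longrightarrow> norm (rgt w) \<le> R"
proof -
  obtain \<mu> where mu: "\<mu> > 0" "\<And>y. \<forall>k\<in>K. y \<bullet> k = 0 \<Longrightarrow> \<mu> * (y \<bullet> y) \<le> - (y \<bullet> (blk22 N *v y))"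
    using mu by blast
  obtain B where B: "B > 0" "\<And>v. norm (N *v v) \<le> norm v * B"
    using bounded_linear.pos_bounded[OF matrix_vector_mul_bounded_linear[of N]] by blast
  have cs: "a \<bullet> (N *v b) \<le> norm a * norm b * B" for a b
  proof -
    have "a \<bullet> (N *v b) \<le> norm a * norm (N *v b)" by (rule norm_cauchy_schwarz)
    also have "\<dots> \<le> norm a * (norm b * B)" using B(2) by (intro mult_left_mono) auto
    finally show ?thesis by (simp add: mult.assoc)
  qed
  define R where "R = max 1 (3 * B / \<mu>)"
  have "norm (rgt w) \<le> R" if w: "norm (lft w) = 1" "\<forall>k\<in>K. rgt w \<bullet> k = 0" "g w \<ge> 0" for w
  proof (rule ccontr)
    assume "\<not> norm (rgt w) \<le> R"
    then have big: "norm (rgt w) > 1" "norm (rgt w) > 3 * B / \<mu>" unfolding R_def by auto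
    define x y where "x = lft w" "y = rgt w"
    have gexp: "g w = inl x \<bullet> (N *v inl x) + inl x \<bullet> (N *v inr y) + inr y \<bullet> (N *v inl x) + inr y \<bullet> (N *v inr y)"
      unfolding g_def x_y_def using w_split[of w]
      by (metis (no_types) inner_add_left inner_add_right matrix_vector_right_distrib add.assoc)
    have t1: "inl x \<bullet> (N *v inl x) \<le> B" using cs[of "inl x" "inl x"] w(1) unfolding x_y_def by simp
    have t2: "inl x \<bullet> (N *v inr y) \<le> norm y * B" using cs[of "inl x" "inr y"] w(1) unfolding x_y_def by simp
    have t3: "inr y \<bullet> (N *v inl x) \<le> norm y * B" using cs[of "inr y" "inl x"] w(1) unfolding x_y_def by simp
    have t4: "inr y \<bullet> (N *v inr y) \<le> - (\<mu> * (norm y)^2)"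
      using mu(2)[of y] w(2) unfolding inr_A_inr x_y_def by (simp add: power2_norm_eq_inner)
    have "3 * B < \<mu> * norm y" using big \<open>\<mu> > 0\<close> unfolding x_y_def by (simp add: field_simps)
    then have "3 * B * norm y < \<mu> * norm y * norm y" using big unfolding x_y_def by (intro mult_strict_right_mono) auto
    moreover have "B \<le> B * norm y" using big B(1) unfolding x_y_def by simp
    ultimately have "B + norm y * B + norm y * B - \<mu> * (norm y)^2 < 0"
      by (simp add: power2_eq_square algebra_simps)
    then have "g w < 0" using gexp t1 t2 t3 t4 by linarith
    then show False using w(3) by simp
  qed
  then show ?thesis by blast
qed

lemma beta0: "\<exists>\<beta>>0. \<forall>w. g w \<ge> 0 \<longrightarrow> \<beta> * (lft w \<bullet> lft w) \<le> f w"
proof -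
  obtain R where R: "\<And>w. norm (lft w) = 1 \<Longrightarrow> \<forall>k\<in>K. rgt w \<bullet> k = 0 \<Longrightarrow> g w \<ge> 0 \<Longrightarrow> norm (rgt w) \<le> R"
    using bound by blast
  define KS where "KS = {w. norm (lft w) = 1} \<inter> (\<Inter>k\<in>K. {w. rgt w \<bullet> k = 0}) \<inter> {w. 0 \<le> g w}"
  have c1: "closed {w. norm (lft w) = (1::real)}"
    by (intro closed_Collect_eq continuous_on_norm cont_lft continuous_on_const)
  have c2: "closed {w. rgt w \<bullet> k = (0::real)}" for k
    by (intro closed_Collect_eq continuous_on_inner cont_rgt continuous_on_const)
  have c3: "closed {w. (0::real) \<le> g w}" unfolding g_def
    by (intro closed_Collect_le cont_quad continuous_on_const)
  have clo: "closed KS" unfolding KS_def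
    using c1 c2 c3 by (intro closed_Int closed_INT) auto
  have bnd: "bounded KS" unfolding bounded_iff
  proof (intro exI ballI)
    fix w assume "w \<in> KS"
    then have "norm (rgt w) \<le> R" "norm (lft w) = 1" using R unfolding KS_def by auto
    moreover have "norm w \<le> norm (lft w) + norm (rgt w)"
    proof -
      have n1: "norm w = norm (inl (lft w) + inr (rgt w))" by (rule arg_cong[OF w_split])
      have n2: "norm (inl (lft w) + inr (rgt w)) \<le> norm (lft w) + norm (rgt w)"
        using norm_triangle_ineq[of "inl (lft w)" "inr (rgt w)"] by simp
      show ?thesis using n1 n2 by linarith
    qed
    ultimately show "norm w \<le> 1 + R" by simp
  qed
  have cKS: "compact KS" using clo bnd compact_eq_bounded_closed by blast
  obtain b where b: "b > 0" "\<And>w. w \<in> KS \<Longrightarrow> b \<le> f w"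
  proof (cases "KS = {}")
    case True then show ?thesis using that[of 1] by auto
  next
    case False
    have "continuous_on KS f" unfolding f_def by (rule cont_quad)
    then obtain w0 where w0: "w0 \<in> KS" "\<And>w. w \<in> KS \<Longrightarrow> f w0 \<le> f w"
      using continuous_attains_inf[OF cKS False] by blast
    have h: "norm (lft w0) = 1" "0 \<le> g w0" using w0(1) unfolding KS_def by blast+
    then have "lft w0 \<noteq> 0" by auto
    then have "f w0 > 0" using fpos h(2) by blast
    then show ?thesis using that w0(2) by blast
  qed
  have "b * (lft w \<bullet> lft w) \<le> f w" if gw: "g w \<ge> 0" for w
  proof (cases "lft w = 0")
    case True
    have wy: "w = inr (rgt w)"
    proof -
      have "w = inl (lft w) + inr (rgt w)" by (rule w_split)
      also have "\<dots> = inr (rgt w)" using True by simp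
      finally show ?thesis .
    qed
    have "rgt w \<bullet> (blk22 N *v rgt w) \<ge> 0" using gw wy unfolding g_def by (metis inr_A_inr)
    moreover have "rgt w \<bullet> (blk22 N *v rgt w) \<le> 0" using psd_negI[OF N22neg] .
    ultimately have "rgt w \<bullet> ((- blk22 N) *v rgt w) = 0" by (simp add: mvm_neg)
    then have "(- blk22 N) *v rgt w = 0" using psd_zero[OF N22neg] by blast
    then have "M *v inr (rgt w) = 0" using kernull by (simp add: mvm_neg)
    then have "f w = 0" unfolding f_def using wy by (metis inner_zero_right)
    then show ?thesis using True by simp
  next
    case False
    define t where "t = norm (lft w)"
    have tp: "t > 0" using False unfolding t_def by simp
    define w' where "w' = (1 / t) *\<^sub>R w"
    obtain y0 z where yz: "y0 \<in> span K" "\<And>k. k \<in> span K \<Longrightarrow> orthogonal z k" "rgt w' = y0 + z"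
      using orthogonal_subspace_decomp_exists[of K "rgt w'"] by blast
    have y0K: "blk22 N *v y0 = 0" using yz(1) subK unfolding span_eq_iff[symmetric] K_def by simp
    have nulN: "N *v inr (- y0) = 0" using N_inr_null[of "- y0"] y0K by (simp add: mvm_negv)
    have nulM: "M *v inr (- y0) = 0" using kernull[of "- y0"] y0K by (simp add: mvm_negv)
    define w'' where "w'' = w' + inr (- y0)"
    have w''lr: "lft w'' = lft w'" "rgt w'' = z" unfolding w''_def using yz(3) by simp_all
    have gw'': "g w'' = g w'" unfolding g_def w''_def by (rule quad_add_null[OF sN nulN])
    have fw'': "f w'' = f w'" unfolding f_def w''_def by (rule quad_add_null[OF sM nulM])
    have gw': "g w' = g w / t^2" unfolding g_def w'_def quad_scale by (simp add: power_divide)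
    have fw': "f w' = f w / t^2" unfolding f_def w'_def quad_scale by (simp add: power_divide)
    have "w'' \<in> KS" unfolding KS_def
    proof (intro IntI CollectI INT_I)
      show "norm (lft w'') = 1" using w''lr tp unfolding w'_def t_def by simp
      show "0 \<le> g w''" using gw'' gw' gw by simp
      fix k assume "k \<in> K"
      then show "rgt w'' \<bullet> k = 0" using yz(2)[of k] w''lr by (simp add: span_base orthogonal_def)
    qed
    then have "b \<le> f w / t^2" using b(2)[of w''] fw'' fw' by simp
    moreover have "lft w \<bullet> lft w = t^2" unfolding t_def by (simp add: power2_norm_eq_inner)
    ultimately show ?thesis using tp by (simp add: field_simps)
  qed
  then show ?thesis using b(1) by blast
qed

lemma tr_diff: "transpose (A - B) = transpose A - transpose (B::real^'n^'m)"
  by (simp add: vec_eq_iff transpose_def)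
lemma tr_scale: "transpose (c *\<^sub>R A) = c *\<^sub>R transpose (A::real^'n^'m)"
  by (simp add: vec_eq_iff transpose_def)
lemma symm_diff: "symm A \<Longrightarrow> symm B \<Longrightarrow> symm (A - B)"
  unfolding symm_def by (simp add: tr_diff)
lemma symm_scale: "symm A \<Longrightarrow> symm (c *\<^sub>R A)"
  unfolding symm_def by (simp add: tr_scale)

lemma converse:
  assumes "has_pos_eigenvalue N"
  shows "\<exists>\<alpha> \<beta>. \<alpha> \<ge> 0 \<and> \<beta> > 0 \<and> loewner_le (betaI0 \<beta>) (M - \<alpha> *\<^sub>R N)"
proof -
  obtain b where b: "b > 0" "\<And>w. g w \<ge> 0 \<Longrightarrow> b * (lft w \<bullet> lft w) \<le> f w" using beta0 by blast
  obtain c v where cv: "c > 0" "v \<noteq> 0" "N *v v = c *\<^sub>R v" using assms unfolding has_pos_eigenvalue_def by blast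
  have ex: "\<exists>v. v \<bullet> (N *v v) > 0" using cv by (intro exI[of _ v]) simp
  have bw: "w \<bullet> (betaI0 b *v w) = b * (lft w \<bullet> lft w)" for w
    unfolding betaI0_mult by (simp add: inner_split[of w])
  have hyp: "w \<bullet> ((M - betaI0 b) *v w) \<ge> 0" if "w \<bullet> (N *v w) \<ge> 0" for w
    using b(2)[of w] that unfolding mvm_diff inner_diff_right bw g_def f_def by simp
  obtain \<alpha> where a: "\<alpha> \<ge> 0" "\<forall>w. w \<bullet> ((M - betaI0 b - \<alpha> *\<^sub>R N) *v w) \<ge> 0"
    using s_lemma[OF ex hyp] by blast
  have eq: "M - \<alpha> *\<^sub>R N - betaI0 b = M - betaI0 b - \<alpha> *\<^sub>R N" by (simp add: algebra_simps)
  have "loewner_le (betaI0 b) (M - \<alpha> *\<^sub>R N)" unfolding loewner_le_def psd_def eq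
    using a(2) symm_diff[OF symm_diff[OF sM symm_betaI0] symm_scale[OF sN]] by simp
  then show ?thesis using a(1) b(1) by blast
qed

end

lemma forward:
  fixes M N :: "real^('q::finite + 'r::finite)^('q + 'r)"
  assumes sM: "symm M" and sN: "symm N" and a: "\<alpha> \<ge> 0" and b: "\<beta> > 0"
    and L: "loewner_le (betaI0 \<beta>) (M - \<alpha> *\<^sub>R N)"
  shows "Zset N \<subseteq> Zset_plus M"
proof
  fix Z assume "Z \<in> Zset N"
  then have pN: "psd (transpose (stackIZ Z) ** N ** stackIZ Z)" unfolding Zset_def by simp
  have "x \<bullet> ((transpose (stackIZ Z) ** M ** stackIZ Z) *v x) > 0" if x: "x \<noteq> 0" for x
  proof -
    define w where "w = inl x + inr (Z *v x)"
    have gw: "w \<bullet> (N *v w) \<ge> 0" using pN unfolding psd_def quad_sandwich stack_mult w_def by simp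
    have "0 \<le> w \<bullet> ((M - \<alpha> *\<^sub>R N - betaI0 \<beta>) *v w)" using L unfolding loewner_le_def psd_def by blast
    also have "\<dots> = w \<bullet> (M *v w) - \<alpha> * (w \<bullet> (N *v w)) - \<beta> * (x \<bullet> x)"
    proof -
      have lw: "lft w = x" unfolding w_def by simp
      have "w \<bullet> (betaI0 \<beta> *v w) = \<beta> * (x \<bullet> x)"
        unfolding betaI0_mult lw by (simp add: inner_split[of w] lw)
      moreover have "(\<alpha> *\<^sub>R N) *v w = \<alpha> *\<^sub>R (N *v w)"
        by (simp add: vec_eq_iff matrix_vector_mult_def sum_distrib_left algebra_simps)
      ultimately show ?thesis unfolding mvm_diff by (simp add: inner_diff_right)
    qed
    finally have "w \<bullet> (M *v w) \<ge> \<beta> * (x \<bullet> x)" using a gw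
      by (smt (verit) mult_nonneg_nonneg)
    moreover have "\<beta> * (x \<bullet> x) > 0" using b x by simp
    ultimately show ?thesis unfolding quad_sandwich stack_mult w_def by simp
  qed
  then show "Z \<in> Zset_plus M" unfolding Zset_plus_def pd_def using symm_sandwich[OF sM] by simp
qed

theorem mainTheorem11:
  fixes M N :: "real^('q::finite + 'r::finite)^('q + 'r)"
  assumes "symm M" and "symm N"
  shows "((\<exists>\<alpha> \<beta>. \<alpha> \<ge> 0 \<and> \<beta> > 0 \<and> loewner_le (betaI0 \<beta>) (M - \<alpha> *\<^sub>R N))
            \<longrightarrow> Zset N \<subseteq> Zset_plus M)
       \<and> ((N \<in> PiSet \<and> loewner_le (blk22 M) 0 \<and> has_pos_eigenvalue N)
            \<longrightarrow> (Zset N \<subseteq> Zset_plus M \<longleftrightarrow>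
                 (\<exists>\<alpha> \<beta>. \<alpha> \<ge> 0 \<and> \<beta> > 0 \<and> loewner_le (betaI0 \<beta>) (M - \<alpha> *\<^sub>R N))))"
proof -
  have F: "(\<exists>\<alpha> \<beta>. \<alpha> \<ge> 0 \<and> \<beta> > 0 \<and> loewner_le (betaI0 \<beta>) (M - \<alpha> *\<^sub>R N))
            \<longrightarrow> Zset N \<subseteq> Zset_plus M"
    using forward[OF assms] by blast
  moreover have "(N \<in> PiSet \<and> loewner_le (blk22 M) 0 \<and> has_pos_eigenvalue N)
            \<longrightarrow> (Zset N \<subseteq> Zset_plus M \<longleftrightarrow>
                 (\<exists>\<alpha> \<beta>. \<alpha> \<ge> 0 \<and> \<beta> > 0 \<and> loewner_le (betaI0 \<beta>) (M - \<alpha> *\<^sub>R N)))"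
  proof (intro impI iffI)
    assume h: "N \<in> PiSet \<and> loewner_le (blk22 M) 0 \<and> has_pos_eigenvalue N"
      and i: "Zset N \<subseteq> Zset_plus M"
    interpret PiNM N M
      using h i assms by unfold_locales auto
    show "\<exists>\<alpha> \<beta>. \<alpha> \<ge> 0 \<and> \<beta> > 0 \<and> loewner_le (betaI0 \<beta>) (M - \<alpha> *\<^sub>R N)"
      using converse h by blast
  next
    assume "\<exists>\<alpha> \<beta>. \<alpha> \<ge> 0 \<and> \<beta> > 0 \<and> loewner_le (betaI0 \<beta>) (M - \<alpha> *\<^sub>R N)"
    then show "Zset N \<subseteq> Zset_plus M" using F by blast
  qed
  ultimately show ?thesis by blast
qed

end
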